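(* Let $(V,g)$ be a Euclidean vector space and $\mathfrak{g}\subseteq\mathfrak{so}(V)$ a Lie subalgebra. Let $V=V_0\oplus\bigoplus_{k=1}^dV_k$ be an orthogonal decomposition where $\mathfrak{g}$ acts trivially on $V_0$ and irreducibly on each $V_k$, $1\le k\le d$. For each $k$ let $\hat V_k=\bigoplus_{j\neq k,\,1\le j\le d}V_j$ and let $\hat{\mathfrak{g}}_k\subseteq\mathfrak{g}$ be the ideal consisting of elements of $\mathfrak{g}$ acting trivially on $\hat V_k$ (regarded as a subalgebra of $\mathfrak{so}(V_k)$). Then $$\Lambda^3V\cap(\Lambda^1V\otimes\mathfrak{g})=\bigoplus_{k=1}^d\Lambda^3V_k\cap(\Lambda^1V_k\otimes\hat{\mathfrak{g}}_k).$$
   Context: $\Lambda^2V$ is identified with $\mathfrak{so}(V)$ via $F\mapsto g(F\cdot,\cdot)$; $\Lambda^3W\cap(\Lambda^1W\otimes\mathfrak{h})=\{T\in\Lambda^3W:X\lrcorner T\in\mathfrak{h}\ \forall X\in W\}$. *)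

theory Defs
  imports "HOL-Analysis.Analysis"
begin

text \<open>The Euclidean vector space (V,g) is a type 'v :: euclidean_space with its inner product.
  Elements of so(V): linear maps that are skew-adjoint.\<close>

definition skew_endo :: "('v::euclidean_space \<Rightarrow> 'v) \<Rightarrow> bool" where
  "skew_endo F \<longleftrightarrow> linear F \<and> (\<forall>x y. inner (F x) y = - inner x (F y))"

definition lie_subalgebra_so :: "('v::euclidean_space \<Rightarrow> 'v) set \<Rightarrow> bool" where
  "lie_subalgebra_so G \<longleftrightarrow>
     (\<forall>F\<in>G. skew_endo F) \<and> (\<lambda>x. 0) \<in> G \<and>
     (\<forall>F\<in>G. \<forall>H\<in>G. (\<lambda>x. F x + H x) \<in> G) \<and>
     (\<forall>c. \<forall>F\<in>G. (\<lambda>x. c *\<^sub>R F x) \<in> G) \<and>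
     (\<forall>F\<in>G. \<forall>H\<in>G. (\<lambda>x. F (H x) - H (F x)) \<in> G)"

definition acts_trivially :: "('v::euclidean_space \<Rightarrow> 'v) set \<Rightarrow> 'v set \<Rightarrow> bool" where
  "acts_trivially G W \<longleftrightarrow> (\<forall>F\<in>G. \<forall>x\<in>W. F x = 0)"

definition invariant_subspace :: "('v::euclidean_space \<Rightarrow> 'v) set \<Rightarrow> 'v set \<Rightarrow> bool" where
  "invariant_subspace G W \<longleftrightarrow> subspace W \<and> (\<forall>F\<in>G. F ` W \<subseteq> W)"

definition acts_irreducibly :: "('v::euclidean_space \<Rightarrow> 'v) set \<Rightarrow> 'v set \<Rightarrow> bool" where
  "acts_irreducibly G W \<longleftrightarrow> invariant_subspace G W \<and> W \<noteq> {0} \<and>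
     (\<forall>U. invariant_subspace G U \<and> U \<subseteq> W \<longrightarrow> U = {0} \<or> U = W)"

text \<open>Lambda^3 V: alternating trilinear forms on V.\<close>

definition alt3 :: "('v::euclidean_space \<Rightarrow> 'v \<Rightarrow> 'v \<Rightarrow> real) \<Rightarrow> bool" where
  "alt3 T \<longleftrightarrow> (\<forall>y z. linear (\<lambda>x. T x y z)) \<and> (\<forall>x z. linear (\<lambda>y. T x y z)) \<and>
     (\<forall>x y. linear (\<lambda>z. T x y z)) \<and>
     (\<forall>x y z. T y x z = - T x y z) \<and> (\<forall>x y z. T x z y = - T x y z)"

text \<open>X \<lrcorner> T, identified with an endomorphism via F \<mapsto> g(F\<cdot>,\<cdot>), lies in G.\<close>

definition contr_in :: "'v \<Rightarrow> ('v::euclidean_space \<Rightarrow> 'v \<Rightarrow> 'v \<Rightarrow> real) \<Rightarrow> ('v \<Rightarrow> 'v) set \<Rightarrow> bool" where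
  "contr_in X T G \<longleftrightarrow> (\<exists>F\<in>G. \<forall>y z. inner (F y) z = T X y z)"

text \<open>Lambda^3 W \<inter> (Lambda^1 W \<otimes> h) for W = V.\<close>

definition L3_cap :: "('v::euclidean_space \<Rightarrow> 'v) set \<Rightarrow> ('v \<Rightarrow> 'v \<Rightarrow> 'v \<Rightarrow> real) set" where
  "L3_cap G = {T. alt3 T \<and> (\<forall>X. contr_in X T G)}"

text \<open>Lambda^3 W, for a subspace W of V, embedded in Lambda^3 V: alternating trilinear forms on V
  vanishing as soon as one argument is orthogonal to W (equivalently, pullbacks of
  forms on W along the orthogonal projection onto W).\<close>

definition supported_on :: "('v::euclidean_space \<Rightarrow> 'v \<Rightarrow> 'v \<Rightarrow> real) \<Rightarrow> 'v set \<Rightarrow> bool" where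
  "supported_on T W \<longleftrightarrow> (\<forall>x. (\<forall>w\<in>W. inner x w = 0) \<longrightarrow> (\<forall>y z. T x y z = 0))"

definition hatV :: "(nat \<Rightarrow> 'v::euclidean_space set) \<Rightarrow> nat \<Rightarrow> nat \<Rightarrow> 'v set" where
  "hatV Vs d k = span (\<Union>j\<in>{1..d} - {k}. Vs j)"

definition hatg :: "('v::euclidean_space \<Rightarrow> 'v) set \<Rightarrow> (nat \<Rightarrow> 'v set) \<Rightarrow> nat \<Rightarrow> nat \<Rightarrow> ('v \<Rightarrow> 'v) set" where
  "hatg G Vs d k = {F\<in>G. \<forall>x\<in>hatV Vs d k. F x = 0}"

end

theory Submission
  imports Defs
begin

lemma sum_eq_single:
  "finite A \<Longrightarrow> k \<in> A \<Longrightarrow> (\<And>j. j \<in> A \<Longrightarrow> j \<noteq> k \<Longrightarrow> f j = 0) \<Longrightarrow> sum f A = f k"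
  using sum.mono_neutral_right[of A "{k}" f] by auto

lemma L3_obtain:
  assumes "T \<in> L3_cap G"
  obtains F where "F \<in> G" "\<And>a b. inner (F a) b = T X a b"
proof -
  have "\<exists>F\<in>G. \<forall>a b. inner (F a) b = T X a b"
    using assms by (simp add: L3_cap_def contr_in_def)
  thus ?thesis using that by blast
qed

lemma decomp_unique:
  fixes Vs :: "nat \<Rightarrow> 'v::euclidean_space set"
  assumes subsp: "\<forall>k\<le>d. subspace (Vs k)"
    and orth: "\<forall>i\<le>d. \<forall>j\<le>d. i \<noteq> j \<longrightarrow> (\<forall>x\<in>Vs i. \<forall>y\<in>Vs j. inner x y = 0)"
    and a: "\<forall>k\<le>d. a k \<in> Vs k" and b: "\<forall>k\<le>d. b k \<in> Vs k"
    and s: "(\<Sum>k\<le>d. a k) = (\<Sum>k\<le>d. b k)" and k: "k \<le> d"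
  shows "a k = b k"
proof -
  define c where "c j = a j - b j" for j
  have c: "\<forall>j\<le>d. c j \<in> Vs j" using a b subsp by (simp add: c_def subspace_diff)
  have "(\<Sum>j\<le>d. c j) = 0" using s by (simp add: c_def sum_subtractf)
  hence "0 = inner (\<Sum>j\<le>d. c j) (c k)" by simp
  also have "\<dots> = (\<Sum>j\<le>d. inner (c j) (c k))" by (simp add: inner_sum_left)
  also have "\<dots> = inner (c k) (c k)"
  proof (rule sum_eq_single)
    show "\<And>j. j \<in> {..d} \<Longrightarrow> j \<noteq> k \<Longrightarrow> inner (c j) (c k) = 0"
      using orth c k by auto
  qed (use k in auto)
  finally have "c k = 0" by simp
  thus ?thesis by (simp add: c_def)
qed

context
  fixes G :: "('v::euclidean_space \<Rightarrow> 'v) set"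
    and Vs :: "nat \<Rightarrow> 'v set"
    and d :: nat
    and p :: "nat \<Rightarrow> 'v \<Rightarrow> 'v"
  assumes lie: "lie_subalgebra_so G"
    and subsp: "\<forall>k\<le>d. subspace (Vs k)"
    and orth: "\<forall>i\<le>d. \<forall>j\<le>d. i \<noteq> j \<longrightarrow> (\<forall>x\<in>Vs i. \<forall>y\<in>Vs j. inner x y = 0)"
    and pinA: "\<forall>k\<le>d. \<forall>v. p k v \<in> Vs k"
    and psumA: "\<forall>v. v = (\<Sum>k\<le>d. p k v)"
    and triv0: "acts_trivially G (Vs 0)"
    and inv: "\<forall>k\<in>{1..d}. invariant_subspace G (Vs k)"
begin

lemma pin: "k \<le> d \<Longrightarrow> p k v \<in> Vs k" using pinA by blast
lemma psum: "v = (\<Sum>k\<le>d. p k v)" using psumA by blast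

lemma G_linear: "F \<in> G \<Longrightarrow> linear F"
  using lie by (auto simp: lie_subalgebra_so_def skew_endo_def)

lemma p_linear: "k \<le> d \<Longrightarrow> linear (p k)"
proof (rule linearI)
  assume k: "k \<le> d"
  fix x y :: 'v and c :: real
  have "(\<Sum>j\<le>d. p j (x + y)) = (\<Sum>j\<le>d. p j x + p j y)"
    using psum[of "x+y"] psum[of x] psum[of y] by (simp add: sum.distrib)
  moreover have "\<forall>j\<le>d. p j x + p j y \<in> Vs j" using pin subsp by (simp add: subspace_add)
  ultimately show "p k (x + y) = p k x + p k y"
    using decomp_unique[OF subsp orth, of "\<lambda>j. p j (x+y)" "\<lambda>j. p j x + p j y"] pin k by blast
  have "(\<Sum>j\<le>d. p j (c *\<^sub>R x)) = (\<Sum>j\<le>d. c *\<^sub>R p j x)"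
    using psum[of "c *\<^sub>R x"] psum[of x] by (metis scaleR_sum_right)
  moreover have "\<forall>j\<le>d. c *\<^sub>R p j x \<in> Vs j" using pin subsp by (simp add: subspace_scale)
  ultimately show "p k (c *\<^sub>R x) = c *\<^sub>R p k x"
    using decomp_unique[OF subsp orth, of "\<lambda>j. p j (c *\<^sub>R x)" "\<lambda>j. c *\<^sub>R p j x"] pin k by blast
qed

lemma p_orth_zero:
  assumes k: "k \<le> d" and x: "\<forall>w\<in>Vs k. inner x w = 0"
  shows "p k x = 0"
proof -
  have "0 = inner x (p k x)" using x pin k by simp
  also have "\<dots> = (\<Sum>j\<le>d. inner (p j x) (p k x))"
    by (subst (1) psum[of x]) (simp add: inner_sum_left)
  also have "\<dots> = inner (p k x) (p k x)"
  proof (rule sum_eq_single)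
    show "\<And>j. j \<in> {..d} \<Longrightarrow> j \<noteq> k \<Longrightarrow> inner (p j x) (p k x) = 0"
      using orth pin k by auto
  qed (use k in auto)
  finally show ?thesis by simp
qed

lemma lin_single:
  assumes f: "linear f" and k: "k \<le> d" and z: "\<And>j. j \<le> d \<Longrightarrow> j \<noteq> k \<Longrightarrow> f (p j y) = 0"
  shows "f y = f (p k y)"
proof -
  have "f y = f (\<Sum>j\<le>d. p j y)" by (subst psum[of y]) simp
  also have "\<dots> = (\<Sum>j\<le>d. f (p j y))" using f by (simp add: linear_sum)
  also have "\<dots> = f (p k y)"
    by (rule sum_eq_single) (use z k in auto)
  finally show ?thesis .
qed

lemma alt3_sw12: "alt3 T \<Longrightarrow> T y x z = - T x y z" unfolding alt3_def by blast
lemma alt3_sw23: "alt3 T \<Longrightarrow> T x z y = - T x y z" unfolding alt3_def by blast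

lemma alt3_cyc: "alt3 T \<Longrightarrow> T z x y = T x y z"
  using alt3_sw12[of T x z y] alt3_sw23[of T x y z] by simp

lemma alt3_lin1: "alt3 T \<Longrightarrow> linear (\<lambda>x. T x y z)" unfolding alt3_def by blast
lemma alt3_lin2: "alt3 T \<Longrightarrow> linear (\<lambda>y. T x y z)" unfolding alt3_def by blast
lemma alt3_lin3: "alt3 T \<Longrightarrow> linear (\<lambda>z. T x y z)" unfolding alt3_def by blast

lemma T_V0:
  assumes T: "T \<in> L3_cap G" and x: "x \<in> Vs 0"
  shows "T x y z = 0"
proof -
  obtain F where F: "F \<in> G" "\<And>a b. inner (F a) b = T y a b"
    using L3_obtain[OF T] by blast
  have "F x = 0" using triv0 F x by (auto simp: acts_trivially_def)
  hence "T y x z = 0" using F(2)[of x z] by simp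
  thus ?thesis using T alt3_sw12[of T x y z] unfolding L3_cap_def by simp
qed

lemma T_mixed:
  assumes T: "T \<in> L3_cap G" and x: "x \<in> Vs i" and y: "y \<in> Vs j"
    and ij: "i \<le> d" "j \<le> d" "i \<noteq> j"
  shows "T x y z = 0"
proof -
  have al: "alt3 T" using T by (simp add: L3_cap_def)
  obtain F where F: "F \<in> G" "\<And>a b. inner (F a) b = T z a b"
    using L3_obtain[OF T] by blast
  have "F x \<in> Vs i"
  proof (cases "i = 0")
    case True
    then have "F x = 0" using triv0 F x by (auto simp: acts_trivially_def)
    then show ?thesis using subsp ij True by (simp add: subspace_0)
  next
    case False
    then have "i \<in> {1..d}" using ij by auto
    then have "F ` Vs i \<subseteq> Vs i" using inv F(1) by (simp add: invariant_subspace_def)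
    then show ?thesis using x by blast
  qed
  hence "inner (F x) y = 0" using orth ij y by blast
  thus ?thesis using F(2) alt3_cyc[OF al, of z x y] by simp
qed

lemma T_single:
  assumes T: "T \<in> L3_cap G" and a: "a \<in> Vs k" and k: "k \<le> d"
  shows "T a y z = T a (p k y) (p k z)"
proof -
  have al: "alt3 T" using T by (simp add: L3_cap_def)
  have "T a y z = T a (p k y) z"
  proof (rule lin_single[where f="\<lambda>y. T a y z", OF _ k])
    show "linear (\<lambda>y. T a y z)" using alt3_lin2[OF al] .
    fix j assume j: "j \<le> d" "j \<noteq> k"
    show "T a (p j y) z = 0" using T_mixed[OF T a pin[OF j(1)]] j k by auto
  qed
  also have "\<dots> = T a (p k y) (p k z)"
  proof (rule lin_single[where f="\<lambda>z. T a (p k y) z", OF _ k])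
    show "linear (\<lambda>z. T a (p k y) z)" using alt3_lin3[OF al] .
    fix j assume j: "j \<le> d" "j \<noteq> k"
    have "T a (p j z) (p k y) = 0" using T_mixed[OF T a pin[OF j(1)]] j k by auto
    thus "T a (p k y) (p j z) = 0" using alt3_sw23[OF al, of a "p k y" "p j z"] by simp
  qed
  finally show ?thesis .
qed

lemma G_sum: "finite S \<Longrightarrow> (\<forall>k\<in>S. f k \<in> G) \<Longrightarrow> (\<lambda>x. \<Sum>k\<in>S. f k x) \<in> G"
proof (induction S rule: finite_induct)
  case empty then show ?case using lie by (simp add: lie_subalgebra_so_def)
next
  case (insert a S)
  then show ?case using lie unfolding lie_subalgebra_so_def by simp
qed

lemma kernel_subspace: "linear F \<Longrightarrow> subspace {x. F x = 0}"
  unfolding subspace_def by (auto simp: linear_0 linear_add linear_scale)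

lemma lhs_sub:
  assumes T: "T \<in> L3_cap G"
  shows "\<exists>Ts. T = (\<lambda>x y z. \<Sum>k\<in>{1..d}. Ts k x y z) \<and>
     (\<forall>k\<in>{1..d}. Ts k \<in> L3_cap (hatg G Vs d k) \<and> supported_on (Ts k) (Vs k))"
proof (intro exI conjI ballI)
  have al: "alt3 T" using T by (simp add: L3_cap_def)
  define Ts where "Ts k = (\<lambda>x y z. T (p k x) (p k y) (p k z))" for k
  show "T = (\<lambda>x y z. \<Sum>k\<in>{1..d}. Ts k x y z)"
  proof (intro ext)
    fix x y z
    have "T x y z = T (\<Sum>k\<le>d. p k x) y z" by (subst psum[of x]) simp
    also have "\<dots> = (\<Sum>k\<le>d. T (p k x) y z)"
      using linear_sum[OF alt3_lin1[OF al, of y z]] by simp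
    also have "\<dots> = (\<Sum>k\<le>d. Ts k x y z)"
      by (rule sum.cong) (auto simp: Ts_def intro: T_single[OF T pin])
    also have "\<dots> = (\<Sum>k\<in>insert 0 {1..d}. Ts k x y z)"
      by (rule sum.cong) auto
    also have "\<dots> = (\<Sum>k\<in>{1..d}. Ts k x y z)"
      using T_V0[OF T pin[of 0]] by (simp add: Ts_def)
    finally show "T x y z = (\<Sum>k\<in>{1..d}. Ts k x y z)" .
  qed
  fix k assume kk: "k \<in> {1..d}"
  hence k: "k \<le> d" by auto
  have pl: "linear (p k)" using p_linear k .
  show "supported_on (Ts k) (Vs k)"
    unfolding supported_on_def Ts_def
    using p_orth_zero[OF k] linear_0[OF alt3_lin1[OF al]] by auto
  have "alt3 (Ts k)"
    unfolding alt3_def Ts_def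
  proof (intro conjI allI)
    fix x y z
    show "linear (\<lambda>x. T (p k x) (p k y) (p k z))"
      using linear_compose[OF pl alt3_lin1[OF al]] by (simp add: o_def)
    show "linear (\<lambda>y. T (p k x) (p k y) (p k z))"
      using linear_compose[OF pl alt3_lin2[OF al]] by (simp add: o_def)
    show "linear (\<lambda>z. T (p k x) (p k y) (p k z))"
      using linear_compose[OF pl alt3_lin3[OF al]] by (simp add: o_def)
    show "T (p k y) (p k x) (p k z) = - T (p k x) (p k y) (p k z)"
      using al unfolding alt3_def by blast
    show "T (p k x) (p k z) (p k y) = - T (p k x) (p k y) (p k z)"
      using al unfolding alt3_def by blast
  qed
  moreover have "contr_in X (Ts k) (hatg G Vs d k)" for X
  proof -
    obtain F where F: "F \<in> G" "\<And>a b. inner (F a) b = T (p k X) a b"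
      using L3_obtain[OF T] by blast
    have Fl: "linear F" using G_linear F(1) .
    have "(\<Union>j\<in>{1..d} - {k}. Vs j) \<subseteq> {x. F x = 0}"
    proof
      fix x assume "x \<in> (\<Union>j\<in>{1..d} - {k}. Vs j)"
      then obtain j where j: "j \<in> {1..d}" "j \<noteq> k" "x \<in> Vs j" by blast
      have "inner (F x) (F x) = 0"
        using F(2) T_mixed[OF T pin[OF k] j(3)] j k by auto
      thus "x \<in> {x. F x = 0}" by simp
    qed
    hence "hatV Vs d k \<subseteq> {x. F x = 0}"
      unfolding hatV_def by (rule span_minimal) (rule kernel_subspace[OF Fl])
    hence "F \<in> hatg G Vs d k" using F(1) by (auto simp: hatg_def)
    moreover have "\<forall>y z. inner (F y) z = Ts k X y z"
      using F(2) T_single[OF T pin[OF k] k] by (simp add: Ts_def)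
    ultimately show ?thesis by (auto simp: contr_in_def)
  qed
  ultimately show "Ts k \<in> L3_cap (hatg G Vs d k)" by (simp add: L3_cap_def)
qed

lemma rhs_sub:
  assumes Ts: "\<forall>k\<in>{1..d}. Ts k \<in> L3_cap (hatg G Vs d k)"
  shows "(\<lambda>x y z. \<Sum>k\<in>{1..d}. Ts k x y z) \<in> L3_cap G"
proof -
  have al: "\<forall>k\<in>{1..d}. alt3 (Ts k)" using Ts by (simp add: L3_cap_def)
  have "alt3 (\<lambda>x y z. \<Sum>k\<in>{1..d}. Ts k x y z)"
    unfolding alt3_def
  proof (intro conjI allI)
    fix x y z
    show "linear (\<lambda>x. \<Sum>k\<in>{1..d}. Ts k x y z)"
      by (rule linear_compose_sum) (use al alt3_lin1 in blast)
    show "linear (\<lambda>y. \<Sum>k\<in>{1..d}. Ts k x y z)"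
      by (rule linear_compose_sum) (use al alt3_lin2 in blast)
    show "linear (\<lambda>z. \<Sum>k\<in>{1..d}. Ts k x y z)"
      by (rule linear_compose_sum) (use al alt3_lin3 in blast)
    show "(\<Sum>k\<in>{1..d}. Ts k y x z) = - (\<Sum>k\<in>{1..d}. Ts k x y z)"
      unfolding sum_negf[symmetric] by (rule sum.cong) (use al alt3_sw12 in blast)+
    show "(\<Sum>k\<in>{1..d}. Ts k x z y) = - (\<Sum>k\<in>{1..d}. Ts k x y z)"
      unfolding sum_negf[symmetric] by (rule sum.cong) (use al alt3_sw23 in blast)+
  qed
  moreover have "contr_in X (\<lambda>x y z. \<Sum>k\<in>{1..d}. Ts k x y z) G" for X
  proof -
    have "\<forall>k\<in>{1..d}. \<exists>F. F \<in> hatg G Vs d k \<and> (\<forall>y z. inner (F y) z = Ts k X y z)"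
    proof
      fix k assume k: "k \<in> {1..d}"
      have "contr_in X (Ts k) (hatg G Vs d k)" using Ts k by (simp add: L3_cap_def)
      thus "\<exists>F. F \<in> hatg G Vs d k \<and> (\<forall>y z. inner (F y) z = Ts k X y z)"
        unfolding contr_in_def by blast
    qed
    then obtain Fk where Fk: "\<And>k. k \<in> {1..d} \<Longrightarrow> Fk k \<in> hatg G Vs d k \<and>
        (\<forall>y z. inner (Fk k y) z = Ts k X y z)"
      by metis
    have "(\<lambda>x. \<Sum>k\<in>{1..d}. Fk k x) \<in> G"
      by (rule G_sum) (use Fk in \<open>auto simp: hatg_def\<close>)
    moreover have "\<forall>y z. inner (\<Sum>k\<in>{1..d}. Fk k y) z = (\<Sum>k\<in>{1..d}. Ts k X y z)"
      using Fk by (simp add: inner_sum_left)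
    ultimately show ?thesis unfolding contr_in_def
      by (intro bexI[of _ "\<lambda>x. \<Sum>k\<in>{1..d}. Fk k x"]) simp_all
  qed
  ultimately show ?thesis by (simp add: L3_cap_def)
qed

lemma uniq:
  assumes Ts: "\<forall>k\<in>{1..d}. Ts k \<in> L3_cap (hatg G Vs d k) \<and> supported_on (Ts k) (Vs k)"
    and z: "(\<lambda>x y z. \<Sum>k\<in>{1..d}. Ts k x y z) = (\<lambda>x y z. 0)"
    and k: "k \<in> {1..d}"
  shows "Ts k = (\<lambda>x y z. 0)"
proof (intro ext)
  fix x y z
  have kd: "k \<le> d" using k by auto
  have al: "alt3 (Ts k)" using Ts k by (simp add: L3_cap_def)
  have "Ts k x y z = Ts k (p k x) y z"
  proof (rule lin_single[where f="\<lambda>x. Ts k x y z", OF _ kd])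
    show "linear (\<lambda>x. Ts k x y z)" using alt3_lin1[OF al] .
    fix j assume j: "j \<le> d" "j \<noteq> k"
    have "\<forall>w\<in>Vs k. inner (p j x) w = 0" using orth pin j kd by blast
    thus "Ts k (p j x) y z = 0" using Ts k by (auto simp: supported_on_def)
  qed
  also have "\<dots> = (\<Sum>i\<in>{1..d}. Ts i (p k x) y z)"
  proof (rule sum_eq_single[symmetric])
    fix i assume i: "i \<in> {1..d}" "i \<noteq> k"
    have "\<forall>w\<in>Vs i. inner (p k x) w = 0" using orth pin i kd by auto
    thus "Ts i (p k x) y z = 0" using Ts i by (auto simp: supported_on_def)
  qed (use k in auto)
  also have "\<dots> = 0" using fun_cong[OF fun_cong[OF fun_cong[OF z]]] by simp
  finally show "Ts k x y z = 0" .
qed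

end

theorem proposition3p1:
  fixes G :: "('v::euclidean_space \<Rightarrow> 'v) set"
    and Vs :: "nat \<Rightarrow> 'v set"
    and d :: nat
  assumes lie: "lie_subalgebra_so G"
    and subsp: "\<forall>k\<le>d. subspace (Vs k)"
    and orth: "\<forall>i\<le>d. \<forall>j\<le>d. i \<noteq> j \<longrightarrow> (\<forall>x\<in>Vs i. \<forall>y\<in>Vs j. inner x y = 0)"
    and spans: "\<forall>v. \<exists>xs. (\<forall>k\<le>d. xs k \<in> Vs k) \<and> v = (\<Sum>k\<le>d. xs k)"
    and triv0: "acts_trivially G (Vs 0)"
    and irr: "\<forall>k\<in>{1..d}. acts_irreducibly G (Vs k)"
  shows "L3_cap G =
           {(\<lambda>x y z. \<Sum>k\<in>{1..d}. Ts k x y z) | Ts.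
              \<forall>k\<in>{1..d}. Ts k \<in> L3_cap (hatg G Vs d k) \<and> supported_on (Ts k) (Vs k)}
       \<and> (\<forall>Ts. (\<forall>k\<in>{1..d}. Ts k \<in> L3_cap (hatg G Vs d k) \<and> supported_on (Ts k) (Vs k))
              \<and> (\<lambda>x y z. \<Sum>k\<in>{1..d}. Ts k x y z) = (\<lambda>x y z. 0)
              \<longrightarrow> (\<forall>k\<in>{1..d}. Ts k = (\<lambda>x y z. 0)))"
proof -
  obtain P where P: "\<And>v. (\<forall>k\<le>d. P v k \<in> Vs k) \<and> v = (\<Sum>k\<le>d. P v k)"
    using spans by metis
  define p where "p k v = P v k" for k v
  have pin: "\<forall>k\<le>d. \<forall>v. p k v \<in> Vs k" using P by (simp add: p_def)
  have psum: "\<forall>v. v = (\<Sum>k\<le>d. p k v)" using P by (simp add: p_def)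
  have inv: "\<forall>k\<in>{1..d}. invariant_subspace G (Vs k)"
    using irr by (simp add: acts_irreducibly_def)
  note L = lhs_sub[where G=G and Vs=Vs and d=d and p=p, OF lie subsp orth pin psum triv0 inv]
    and R = rhs_sub[where G=G and Vs=Vs and d=d and p=p, OF lie subsp orth pin psum triv0 inv]
    and U = uniq[where G=G and Vs=Vs and d=d and p=p, OF lie subsp orth pin psum triv0 inv]
  show ?thesis
  proof (intro conjI allI impI)
    show "L3_cap G = {(\<lambda>x y z. \<Sum>k\<in>{1..d}. Ts k x y z) | Ts.
              \<forall>k\<in>{1..d}. Ts k \<in> L3_cap (hatg G Vs d k) \<and> supported_on (Ts k) (Vs k)}"
    proof (intro equalityI subsetI)
      fix T assume "T \<in> L3_cap G"
      from L[OF this] obtain Ts where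
        "T = (\<lambda>x y z. \<Sum>k\<in>{1..d}. Ts k x y z)"
        "\<forall>k\<in>{1..d}. Ts k \<in> L3_cap (hatg G Vs d k) \<and> supported_on (Ts k) (Vs k)"
        by blast
      then show "T \<in> {(\<lambda>x y z. \<Sum>k\<in>{1..d}. Ts k x y z) | Ts.
              \<forall>k\<in>{1..d}. Ts k \<in> L3_cap (hatg G Vs d k) \<and> supported_on (Ts k) (Vs k)}"
        by blast
    next
      fix T assume "T \<in> {(\<lambda>x y z. \<Sum>k\<in>{1..d}. Ts k x y z) | Ts.
              \<forall>k\<in>{1..d}. Ts k \<in> L3_cap (hatg G Vs d k) \<and> supported_on (Ts k) (Vs k)}"
      then obtain Ts where
        "T = (\<lambda>x y z. \<Sum>k\<in>{1..d}. Ts k x y z)"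
        "\<forall>k\<in>{1..d}. Ts k \<in> L3_cap (hatg G Vs d k) \<and> supported_on (Ts k) (Vs k)"
        by blast
      then show "T \<in> L3_cap G" using R[of Ts] by simp
    qed
  next
    fix Ts assume "(\<forall>k\<in>{1..d}. Ts k \<in> L3_cap (hatg G Vs d k) \<and> supported_on (Ts k) (Vs k))
              \<and> (\<lambda>x y z. \<Sum>k\<in>{1..d}. Ts k x y z) = (\<lambda>x y z. 0)"
    thus "\<forall>k\<in>{1..d}. Ts k = (\<lambda>x y z. 0)" using U[of Ts] by simp
  qed
qed

end
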